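(* Let $(A,C,k)$ be an instance and $W$ a committee with representation ratio $\rho$. Then every CC-completion of $W$ has representation ratio at least $\rho+(1-\rho)\frac{k-|W|}{k}$.
   Context: An instance $(A,C,k)$ consists of a finite nonempty candidate set $C$, voters $N=\{1,\dots,n\}$, approval sets $A_i\subseteq C$, and a committee size $1\le k\le|C|$. A committee is $W\subseteq C$ with $|W|\le k$. $\mathrm{cov}(W)=|\{i\in N: A_i\cap W\ne\emptyset\}|$; the representation ratio of $W$ is $\mathrm{cov}(W)/\max\{\mathrm{cov}(W'):W'\subseteq C,|W'|=k\}$. A CC-completion of $W$ is $W\cup T$ where $T\subseteq C\setminus W$, $|T|=k-|W|$, and $T$ maximizes $\mathrm{cov}(W\cup T)$ among such sets. *)

theory Defs
  imports Complex_Main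
begin

definition cc_instance :: "'c set \<Rightarrow> nat \<Rightarrow> (nat \<Rightarrow> 'c set) \<Rightarrow> nat \<Rightarrow> bool" where
  "cc_instance C n A k \<longleftrightarrow> finite C \<and> C \<noteq> {} \<and> (\<forall>i\<in>{1..n}. A i \<subseteq> C) \<and> 1 \<le> k \<and> k \<le> card C"

definition committee :: "'c set \<Rightarrow> nat \<Rightarrow> 'c set \<Rightarrow> bool" where
  "committee C k W \<longleftrightarrow> W \<subseteq> C \<and> card W \<le> k"

definition cov :: "nat \<Rightarrow> (nat \<Rightarrow> 'c set) \<Rightarrow> 'c set \<Rightarrow> nat" where
  "cov n A W = card {i \<in> {1..n}. A i \<inter> W \<noteq> {}}"

definition opt_cov :: "'c set \<Rightarrow> nat \<Rightarrow> (nat \<Rightarrow> 'c set) \<Rightarrow> nat \<Rightarrow> nat" where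
  "opt_cov C n A k = Max {cov n A W' | W'. W' \<subseteq> C \<and> card W' = k}"

definition rep_ratio :: "'c set \<Rightarrow> nat \<Rightarrow> (nat \<Rightarrow> 'c set) \<Rightarrow> nat \<Rightarrow> 'c set \<Rightarrow> real" where
  "rep_ratio C n A k W = real (cov n A W) / real (opt_cov C n A k)"

definition cc_completion :: "'c set \<Rightarrow> nat \<Rightarrow> (nat \<Rightarrow> 'c set) \<Rightarrow> nat \<Rightarrow> 'c set \<Rightarrow> 'c set \<Rightarrow> bool" where
  "cc_completion C n A k W W' \<longleftrightarrow> (\<exists>T. T \<subseteq> C - W \<and> card T = k - card W \<and>
      (\<forall>T'. T' \<subseteq> C - W \<and> card T' = k - card W \<longrightarrow> cov n A (W \<union> T') \<le> cov n A (W \<union> T)) \<and>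
      W' = W \<union> T)"

end

theory Submission imports Defs begin

lemma avg_subset:
  fixes g :: "'a \<Rightarrow> nat"
  shows "finite D \<Longrightarrow> m \<le> card D \<Longrightarrow> \<exists>S\<subseteq>D. card S = m \<and> m * sum g D \<le> card D * sum g S"
proof (induction "card D" arbitrary: D)
  case 0
  then show ?case by auto
next
  case (Suc j)
  show ?case
  proof (cases "m = card D")
    case True
    then show ?thesis by auto
  next
    case False
    hence mj: "m \<le> j" using Suc by auto
    have "D \<noteq> {}" using Suc(2) by auto
    hence "Min (g ` D) \<in> g ` D" using Suc(3) by simp
    then obtain d where d: "d \<in> D" "g d = Min (g ` D)" by auto
    hence dmin: "\<forall>x\<in>D. g d \<le> g x" using Suc(3) by simp
    have cj: "j = card (D - {d})" using Suc(2) d by simp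
    obtain S where S: "S \<subseteq> D - {d}" "card S = m" "m * sum g (D - {d}) \<le> j * sum g S"
      using Suc(1)[OF cj] Suc(3) mj cj by auto
    have "sum (\<lambda>_. g d) S \<le> sum g S" using S dmin by (intro sum_mono) auto
    hence h1: "m * g d \<le> sum g S" using S by simp
    have h2: "sum g D = g d + sum g (D - {d})" using d Suc(3) by (simp add: sum.remove)
    have "m * sum g D = m * g d + m * sum g (D - {d})" using h2 by (simp add: algebra_simps)
    also have "\<dots> \<le> sum g S + j * sum g S" using h1 S(3) by linarith
    also have "\<dots> = card D * sum g S" using Suc(2)[symmetric] by simp
    finally show ?thesis using S by blast
  qed
qed

lemma extend_subset:
  assumes "finite B" "X \<subseteq> B" "card X \<le> m" "m \<le> card B"
  shows "\<exists>T. X \<subseteq> T \<and> T \<subseteq> B \<and> card T = m"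
proof -
  have "m - card X \<le> card (B - X)" using assms by (simp add: card_Diff_subset finite_subset)
  then obtain Y where Y: "Y \<subseteq> B - X" "card Y = m - card X"
    by (meson obtain_subset_with_card_n)
  have "finite X" "finite Y" using assms Y by (auto intro: finite_subset)
  hence "card (X \<union> Y) = card X + card Y" using Y by (intro card_Un_disjoint) auto
  thus ?thesis using Y assms by (intro exI[of _ "X \<union> Y"]) auto
qed


theorem lemma3:
  fixes C :: "'c set" and n k :: nat and A :: "nat \<Rightarrow> 'c set" and W W' :: "'c set" and \<rho> :: real
  assumes "cc_instance C n A k"
    and "committee C k W"
    and "opt_cov C n A k > 0"
    and "\<rho> = rep_ratio C n A k W"
    and "cc_completion C n A k W W'"
  shows "rep_ratio C n A k W' \<ge> \<rho> + (1 - \<rho>) * (real (k - card W) / real k)"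
proof -
  define cvs where "cvs X = {i \<in> {1..n}. A i \<inter> X \<noteq> {}}" for X
  have covc: "cov n A X = card (cvs X)" for X unfolding cov_def cvs_def by simp
  have fincv: "finite (cvs X)" for X unfolding cvs_def by simp
  have finC: "finite C" and kC: "k \<le> card C" and k1: "1 \<le> k"
    using assms(1) unfolding cc_instance_def by auto
  have WC: "W \<subseteq> C" and Wk: "card W \<le> k" using assms(2) unfolding committee_def by auto
  define opt where "opt = opt_cov C n A k"
  define M where "M = {cov n A W' | W'. W' \<subseteq> C \<and> card W' = k}"
  have "M \<subseteq> cov n A ` Pow C" unfolding M_def by auto
  hence finM: "finite M" using finC by (meson finite_Pow_iff finite_imageI finite_subset)
  obtain Q0 where "Q0 \<subseteq> C" "card Q0 = k" using kC by (meson obtain_subset_with_card_n)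
  hence "M \<noteq> {}" unfolding M_def by auto
  hence "Max M \<in> M" using finM by simp
  then obtain Opt where Opt: "Opt \<subseteq> C" "card Opt = k" "cov n A Opt = opt"
    unfolding M_def opt_def opt_cov_def by auto
  define U where "U = cvs Opt - cvs W"
  define D where "D = Opt - W"
  have finU: "finite U" unfolding U_def using fincv by simp
  have finD: "finite D" unfolding D_def using Opt finC by (auto intro: finite_subset)
  have cardD: "card D \<le> k" unfolding D_def using Opt finC
    by (metis Diff_subset card_mono finite_subset)
  have exc: "\<exists>c. c \<in> D \<and> c \<in> A i" if "i \<in> U" for i
    using that unfolding U_def D_def cvs_def by auto
  define f where "f i = (SOME c. c \<in> D \<and> c \<in> A i)" for i
  have f: "f i \<in> D \<and> f i \<in> A i" if "i \<in> U" for i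
    unfolding f_def using someI_ex[OF exc[OF that]] .
  define g where "g c = card {i \<in> U. f i = c}" for c
  have bridge: "sum g S = card {i \<in> U. f i \<in> S}" if "finite S" for S
  proof -
    have "{i \<in> U. f i \<in> S} = (\<Union>c\<in>S. {i \<in> U. f i = c})" by auto
    moreover have "card (\<Union>c\<in>S. {i \<in> U. f i = c}) = (\<Sum>c\<in>S. card {i \<in> U. f i = c})"
      using that finU by (intro card_UN_disjoint) auto
    ultimately have "card {i \<in> U. f i \<in> S} = (\<Sum>c\<in>S. card {i \<in> U. f i = c})" by simp
    thus ?thesis unfolding g_def by simp
  qed
  have sumD: "sum g D = card U"
  proof -
    have "{i \<in> U. f i \<in> D} = U" using f by auto
    thus ?thesis using bridge[OF finD] by simp
  qed
  define m where "m = k - card W"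
  have finCW: "finite (C - W)" using finC by simp
  have cardCW: "m \<le> card (C - W)" unfolding m_def using WC finC kC
    by (simp add: card_Diff_subset finite_subset)
  have DCW: "D \<subseteq> C - W" unfolding D_def using Opt by auto
  have mk: "m \<le> k" unfolding m_def by simp
  obtain S T0 where ST: "S \<subseteq> D" "S \<subseteq> T0" "T0 \<subseteq> C - W" "card T0 = m"
      "m * card U \<le> k * card {i \<in> U. f i \<in> S}"
  proof (cases "m \<le> card D")
    case True
    then obtain S where S: "S \<subseteq> D" "card S = m" "m * sum g D \<le> card D * sum g S"
      using avg_subset[OF finD] by blast
    have fS: "finite S" using S finD by (auto intro: finite_subset)
    have "m * card U \<le> card D * card {i \<in> U. f i \<in> S}"
      using S(3) sumD bridge[OF fS] by simp
    also have "\<dots> \<le> k * card {i \<in> U. f i \<in> S}" using cardD by (simp add: mult_right_mono)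
    finally show ?thesis using that[of S S] S DCW by auto
  next
    case False
    then obtain T where T: "D \<subseteq> T" "T \<subseteq> C - W" "card T = m"
      using extend_subset[OF finCW DCW _ cardCW] by auto
    have eq: "card U = card {i \<in> U. f i \<in> D}" using sumD bridge[OF finD] by simp
    have "m * card U \<le> k * card {i \<in> U. f i \<in> D}" using mk unfolding eq[symmetric] by simp
    then show ?thesis using that[of D T] T by blast
  qed
  define B where "B = {i \<in> U. f i \<in> S}"
  have finT0: "finite T0" using ST finCW by (auto intro: finite_subset)
  have "cvs W \<union> B \<subseteq> cvs (W \<union> T0)"
  proof
    fix i assume "i \<in> cvs W \<union> B"
    thus "i \<in> cvs (W \<union> T0)"
    proof
      assume "i \<in> cvs W" thus ?thesis unfolding cvs_def by auto
    next
      assume "i \<in> B"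
      hence "i \<in> U" "f i \<in> T0" "f i \<in> A i" using f ST unfolding B_def by auto
      thus ?thesis unfolding cvs_def U_def by auto
    qed
  qed
  moreover have "cvs W \<inter> B = {}" unfolding B_def U_def by auto
  moreover have "finite B" unfolding B_def using finU by simp
  ultimately have key1: "cov n A W + card B \<le> cov n A (W \<union> T0)"
    unfolding covc using fincv card_mono
    by (metis card_Un_disjoint)
  have "cvs Opt \<subseteq> U \<union> cvs W" unfolding U_def by auto
  hence "card (cvs Opt) \<le> card U + card (cvs W)" using fincv finU
    by (meson card_Un_le card_mono finite_UnI order_trans)
  hence key2: "opt \<le> card U + cov n A W" using Opt covc by simp
  obtain T where T: "T \<subseteq> C - W" "card T = k - card W"
      "\<forall>T'. T' \<subseteq> C - W \<and> card T' = k - card W \<longrightarrow> cov n A (W \<union> T') \<le> cov n A (W \<union> T)"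
      "W' = W \<union> T"
    using assms(5) unfolding cc_completion_def by blast
  have key3: "cov n A (W \<union> T0) \<le> cov n A W'" using T ST unfolding m_def by auto
  define a where "a = real (cov n A W)"
  define b where "b = real (card B)"
  define u where "u = real (card U)"
  define c where "c = real (cov n A W')"
  define p where "p = real opt"
  have r1: "c \<ge> a + b" using key1 key3 unfolding a_def b_def c_def by simp
  have r2: "real m * u \<le> real k * b" using ST(5) unfolding u_def b_def B_def
    by (metis of_nat_le_iff of_nat_mult)
  have r3: "p \<le> u + a" using key2 unfolding p_def u_def a_def by simp
  have pp: "p > 0" using assms(3) unfolding p_def opt_def by simp
  have kp: "real k > 0" using k1 by simp
  have m0: "real m \<ge> 0" by simp
  have "real m * (p - a) \<le> real m * u" using r3 m0 by (intro mult_left_mono) auto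
  moreover have "real k * (a + b) \<le> real k * c" using r1 kp by (intro mult_left_mono) auto
  ultimately have main: "real k * c \<ge> real k * a + real m * (p - a)"
    using r2 by (simp add: algebra_simps)
  have rho: "\<rho> = a / p" using assms(4) unfolding rep_ratio_def a_def p_def opt_def by simp
  have lhs: "rep_ratio C n A k W' = c / p" unfolding rep_ratio_def c_def p_def opt_def by simp
  have "\<rho> + (1 - \<rho>) * (real m / real k) = (real k * a + real m * (p - a)) / (real k * p)"
    unfolding rho using pp kp by (simp add: field_simps)
  also have "\<dots> \<le> (real k * c) / (real k * p)"
    using main pp kp by (intro divide_right_mono) auto
  also have "\<dots> = c / p" using kp by simp
  finally show ?thesis using lhs unfolding m_def by simp
qed

end
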